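(* Let $\mathcal{E}$ be a differentially connected equation and $\tau\colon\tilde{\mathcal{E}}\to\mathcal{E}$ an irreducible finite-dimensional Abelian covering. Then: (1) if $\dim_{\mathbb{R}}\mathrm{CL}(\mathcal{E})=\infty$, then $\dim_{\mathbb{R}}\mathrm{CL}(\tilde{\mathcal{E}})=\infty$; (2) if $\mathrm{sym}\,\mathcal{E}$ is infinite-dimensional, then $\tilde{\mathcal{E}}$ has an infinite-dimensional space of symmetries or an infinite-dimensional space $\mathrm{CL}(\tilde{\mathcal{E}})$ (or both).
   Context: Setting: $\mathcal{E}$ is an infinitely prolonged equation with two independent variables $x,y$ and commuting total derivatives $D_x,D_y$; differentially connected means $D_xh=D_yh=0$ has only constant solutions. Symmetries are $\pi_\infty$-vertical vector fields commuting with $D_x,D_y$, forming $\mathrm{sym}\,\mathcal{E}$. Conservation laws are horizontal 1-forms $X\,dx+Y\,dy$ with $D_xY=D_yX$, modulo trivial ones $D_xP\,dx+D_yP\,dy$, forming $\mathrm{CL}(\mathcal{E})$. A covering $\tau\colon\tilde{\mathcal{E}}\to\mathcal{E}$ of finite rank $r$ has fiber coordinates $w^1,\dots,w^r$ and commuting total derivatives $\tilde D_x=D_x+\sum X^\alpha\partial/\partial w^\alpha$, $\tilde D_y=D_y+\sum Y^\alpha\partial/\partial w^\alpha$; it is Abelian if the coordinates can be chosen with $X^\alpha,Y^\alpha\in\mathcal{F}(\mathcal{E})$, and irreducible if $\tilde D_xh=\tilde D_yh=0$ has only constant solutions on $\tilde{\mathcal{E}}$. Symmetries and conservation laws of $\tilde{\mathcal{E}}$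 are defined in the same way with $\tilde D_x,\tilde D_y$ (symmetries being vector fields on $\tilde{\mathcal{E}}$ vertical over $M$). *)

theory Defs
  imports Complex_Main
begin

text \<open>Abstract algebraic model (Krasil'shchik--Vinogradov style) of an infinitely
prolonged equation with two independent variables: the function algebra F(E) is a
commutative real algebra (type 'a), total derivatives are commuting derivations,
vector fields are derivations of the function algebra.\<close>

definition derivation :: "('a::{real_algebra_1,comm_ring_1} \<Rightarrow> 'a) \<Rightarrow> bool" where
  "derivation D \<longleftrightarrow> linear D \<and> (\<forall>a b. D (a * b) = a * D b + D a * b)"

definition total_derivs :: "('a::{real_algebra_1,comm_ring_1} \<Rightarrow> 'a) \<Rightarrow> ('a \<Rightarrow> 'a) \<Rightarrow> bool" where
  "total_derivs Dx Dy \<longleftrightarrow> derivation Dx \<and> derivation Dy \<and> Dx \<circ> Dy = Dy \<circ> Dx"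

text \<open>Differential connectedness (resp. irreducibility, for a covering equation).\<close>
definition diff_connected :: "('a::{real_algebra_1,comm_ring_1} \<Rightarrow> 'a) \<Rightarrow> ('a \<Rightarrow> 'a) \<Rightarrow> bool" where
  "diff_connected Dx Dy \<longleftrightarrow> (\<forall>h. Dx h = 0 \<and> Dy h = 0 \<longrightarrow> h \<in> range of_real)"

text \<open>Symmetries: derivations vertical over M (annihilating the set B of functions
pulled back from the base M) that commute with both total derivatives.\<close>
definition sym_set :: "'a set \<Rightarrow> ('a::{real_algebra_1,comm_ring_1} \<Rightarrow> 'a) \<Rightarrow> ('a \<Rightarrow> 'a) \<Rightarrow> ('a \<Rightarrow> 'a) set" where
  "sym_set B Dx Dy = {\<phi>. derivation \<phi> \<and> (\<forall>b\<in>B. \<phi> b = 0) \<and> \<phi> \<circ> Dx = Dx \<circ> \<phi> \<and> \<phi> \<circ> Dy = Dy \<circ> \<phi>}"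

definition fin_dim_maps :: "('a \<Rightarrow> 'b::real_vector) set \<Rightarrow> bool" where
  "fin_dim_maps S \<longleftrightarrow> (\<exists>Bs. finite Bs \<and> (\<forall>\<phi>\<in>S. \<exists>c. \<phi> = (\<lambda>f. \<Sum>\<psi>\<in>Bs. c \<psi> *\<^sub>R \<psi> f)))"

text \<open>CL = {(X,Y) | Dx Y = Dy X} / {(Dx P, Dy P)} is finite-dimensional over the reals
iff every conservation law is, modulo trivial ones, a real combination of finitely
many fixed forms.\<close>
definition CL_fin_dim :: "('a::{real_algebra_1,comm_ring_1} \<Rightarrow> 'a) \<Rightarrow> ('a \<Rightarrow> 'a) \<Rightarrow> bool" where
  "CL_fin_dim Dx Dy \<longleftrightarrow>
     (\<exists>(n::nat) Xs Ys. \<forall>X Y. Dx Y = Dy X \<longrightarrow>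
        (\<exists>c P. X = (\<Sum>i<n. c i *\<^sub>R Xs i) + Dx P \<and> Y = (\<Sum>i<n. c i *\<^sub>R Ys i) + Dy P))"

text \<open>A covering of finite rank r with fiber coordinates w 0, ..., w (r-1), in which the
coordinates are Abelian (tilde-D_x w^alpha, tilde-D_y w^alpha lie in F(E)).
F(E~) is the algebra 'b, iota: F(E) -> F(E~) is the pull-back tau^*.
The conditions encode that E~ = E x R^r locally with coordinates w:
 - partial derivatives d/dw^alpha exist, kill F(E), and their common kernel is F(E);
 - every vector field on E lifts to E~ with zero w-components;
 - a vector field on E~ is determined by its values on F(E) and on the w^alpha.\<close>
definition abelian_covering ::
  "('a::{real_algebra_1,comm_ring_1} \<Rightarrow> 'a) \<Rightarrow> ('a \<Rightarrow> 'a) \<Rightarrow> ('a \<Rightarrow> 'b::{real_algebra_1,comm_ring_1})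
    \<Rightarrow> nat \<Rightarrow> (nat \<Rightarrow> 'b) \<Rightarrow> ('b \<Rightarrow> 'b) \<Rightarrow> ('b \<Rightarrow> 'b) \<Rightarrow> bool" where
  "abelian_covering Dx Dy \<iota> r w Dtx Dty \<longleftrightarrow>
     inj \<iota> \<and> linear \<iota> \<and> \<iota> 1 = 1 \<and> (\<forall>a b. \<iota> (a * b) = \<iota> a * \<iota> b)
   \<and> total_derivs Dtx Dty
   \<and> (\<forall>f. Dtx (\<iota> f) = \<iota> (Dx f)) \<and> (\<forall>f. Dty (\<iota> f) = \<iota> (Dy f))
   \<and> (\<forall>\<alpha><r. Dtx (w \<alpha>) \<in> range \<iota> \<and> Dty (w \<alpha>) \<in> range \<iota>)
   \<and> (\<exists>d. (\<forall>\<alpha><r. derivation (d \<alpha>) \<and> (\<forall>f. d \<alpha> (\<iota> f) = 0)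
                 \<and> (\<forall>\<beta><r. d \<alpha> (w \<beta>) = (if \<alpha> = \<beta> then 1 else 0)))
         \<and> (\<forall>h. (\<forall>\<alpha><r. d \<alpha> h = 0) \<longrightarrow> h \<in> range \<iota>))
   \<and> (\<forall>\<phi>. derivation \<phi> \<longrightarrow>
        (\<exists>\<psi>. derivation \<psi> \<and> (\<forall>f. \<psi> (\<iota> f) = \<iota> (\<phi> f)) \<and> (\<forall>\<alpha><r. \<psi> (w \<alpha>) = 0)))
   \<and> (\<forall>\<psi>. derivation \<psi> \<and> (\<forall>f. \<psi> (\<iota> f) = 0) \<and> (\<forall>\<alpha><r. \<psi> (w \<alpha>) = 0) \<longrightarrow> \<psi> = (\<lambda>_. 0))"

end

theory Submission imports Defs "HOL-Library.Function_Algebras" "HOL-Analysis.Product_Vector" begin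

instantiation "fun" :: (type, real_vector) real_vector
begin
definition scaleR_fun :: "real \<Rightarrow> ('a \<Rightarrow> 'b) \<Rightarrow> 'a \<Rightarrow> 'b" where
  "scaleR_fun t f = (\<lambda>x. t *\<^sub>R f x)"
instance by standard (auto simp: scaleR_fun_def fun_eq_iff scaleR_add_right scaleR_add_left)
end

lemma scaleR_fun_apply[simp]: "(t *\<^sub>R f) x = t *\<^sub>R f x"
  by (simp add: scaleR_fun_def)

lemma sum_fun_apply: "(\<Sum>i\<in>S. f i) x = (\<Sum>i\<in>S. f i x)"
  by (induction S rule: infinite_finite_induct) auto

lemma minus_fun_apply'[simp]: "((f::'a \<Rightarrow> 'b::ab_group_add) - g) x = f x - g x"
  by simp

lemma sum_split_add: "(\<Sum>i<m+r. f i) = (\<Sum>i<m. f i) + (\<Sum>i<r. f (m+i))"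
  for f :: "nat \<Rightarrow> 'b::comm_monoid_add"
  by (induction r) (auto simp: add.assoc)

lemma der_linear: "derivation D \<Longrightarrow> linear D" by (simp add: derivation_def)
lemma der_mult: "derivation D \<Longrightarrow> D (a * b) = a * D b + D a * b" by (simp add: derivation_def)

lemma der_one: assumes "derivation D" shows "D 1 = 0"
proof -
  have "D (1*1) = 1 * D 1 + D 1 * 1" by (rule der_mult[OF assms])
  then show ?thesis by simp
qed

lemma der_of_real: assumes "derivation D" shows "D (of_real c) = 0"
proof -
  have "D (c *\<^sub>R 1) = c *\<^sub>R D 1" using der_linear[OF assms] linear_cmul by blast
  then show ?thesis using der_one[OF assms] by (simp add: scaleR_conv_of_real)
qed

lemma der_comm: assumes "derivation D" "derivation E"
  shows "derivation (\<lambda>h. D (E h) - E (D h))"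
proof -
  have lD: "linear D" and lE: "linear E" using assms der_linear by auto
  have "linear (\<lambda>h. D (E h) - E (D h))"
    by (rule linearI) (simp_all add: linear_add[OF lD] linear_add[OF lE] linear_cmul[OF lD] linear_cmul[OF lE] scaleR_diff_right)
  moreover have "D (E (a*b)) - E (D (a*b)) = a * (D (E b) - E (D b)) + (D (E a) - E (D a)) * b" for a b
    by (simp add: der_mult[OF assms(1)] der_mult[OF assms(2)] linear_add[OF lD] linear_add[OF lE] algebra_simps)
  ultimately show ?thesis by (simp add: derivation_def)
qed

lemma der_add: assumes "derivation D" "derivation E" shows "derivation (\<lambda>h. D h + E h)"
proof -
  have lD: "linear D" and lE: "linear E" using assms der_linear by auto
  have "linear (\<lambda>h. D h + E h)"
    by (rule linearI) (simp_all add: linear_add[OF lD] linear_add[OF lE] linear_cmul[OF lD] linear_cmul[OF lE] scaleR_add_right)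
  moreover have "D (a*b) + E (a*b) = a * (D b + E b) + (D a + E a) * b" for a b
    unfolding der_mult[OF assms(1)] der_mult[OF assms(2)] by (simp add: distrib_left distrib_right)
  ultimately show ?thesis by (simp add: derivation_def)
qed

lemma der_scale: assumes "derivation D" shows "derivation (\<lambda>h. t *\<^sub>R D h)"
proof -
  have lD: "linear D" using assms der_linear by auto
  have "linear (\<lambda>h. t *\<^sub>R D h)"
    by (rule linearI) (simp_all add: linear_add[OF lD] linear_cmul[OF lD] scaleR_add_right)
  moreover have "t *\<^sub>R D (a*b) = a * (t *\<^sub>R D b) + (t *\<^sub>R D a) * b" for a b
    unfolding der_mult[OF assms(1)] by (simp add: scaleR_add_right)
  ultimately show ?thesis by (simp add: derivation_def)
qed

lemma der_multP: assumes "derivation D" shows "derivation (\<lambda>h. (P::'a::{real_algebra_1,comm_ring_1}) * D h)"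
proof -
  have lD: "linear D" using assms der_linear by auto
  have "linear (\<lambda>h. P * D h)"
    by (rule linearI) (simp_all add: linear_add[OF lD] linear_cmul[OF lD] distrib_left)
  moreover have "P * D (a*b) = a * (P * D b) + (P * D a) * b" for a b
    unfolding der_mult[OF assms(1)] by (simp add: distrib_left mult.left_commute mult.assoc)
  ultimately show ?thesis by (simp add: derivation_def)
qed

lemma der_zero: "derivation (\<lambda>h. (0::'a::{real_algebra_1,comm_ring_1}))"
  by (simp add: derivation_def linearI)

lemma der_sum: assumes "\<And>i. i \<in> S \<Longrightarrow> derivation (D i)"
  shows "derivation (\<lambda>h. \<Sum>i\<in>S. D i h)"
  using assms
proof (induction S rule: infinite_finite_induct)
  case (insert x F)
  have "derivation (\<lambda>h. D x h + (\<Sum>i\<in>F. D i h))"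
    by (rule der_add) (use insert in auto)
  then show ?case using insert by simp
qed (simp_all add: der_zero)

lemma fin_gen:
  fixes Q :: "'u::real_vector \<Rightarrow> (nat \<Rightarrow> real) \<Rightarrow> bool"
  assumes "\<And>w w' c c'. Q w c \<Longrightarrow> Q w' c' \<Longrightarrow> Q (w + w') (\<lambda>i. c i + c' i)"
  and "\<And>w c t. Q w c \<Longrightarrow> Q (t *\<^sub>R w) (\<lambda>i. t * c i)"
  and "\<And>w c c'. \<forall>i<n. c i = c' i \<Longrightarrow> Q w c \<Longrightarrow> Q w c'"
  and "\<And>w w'. w\<in>W \<Longrightarrow> w'\<in>W \<Longrightarrow> w + w' \<in> W"
  and "\<And>w t. w\<in>W \<Longrightarrow> t *\<^sub>R w \<in> W"
  and "\<forall>w\<in>W. \<exists>c. Q w c"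
  shows "\<exists>(m::nat) ws. (\<forall>j<m. ws j \<in> W) \<and> (\<forall>w\<in>W. \<exists>a. Q (w - (\<Sum>j<m. a j *\<^sub>R ws j)) (\<lambda>_. 0))"
  using assms
proof (induction n arbitrary: Q W)
  case (0 Q W)
  have "\<forall>w\<in>W. Q w (\<lambda>_. 0)"
  proof
    fix w assume "w \<in> W"
    then obtain c where "Q w c" using "0.prems"(6) by blast
    then show "Q w (\<lambda>_. 0)" using "0.prems"(3)[of c "\<lambda>_. 0"] by simp
  qed
  then have "(\<forall>j<(0::nat). (undefined::nat\<Rightarrow>'u) j \<in> W) \<and> (\<forall>w\<in>W. \<exists>a. Q (w - (\<Sum>j<(0::nat). a j *\<^sub>R (undefined::nat\<Rightarrow>'u) j)) (\<lambda>_. 0))" by simp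
  then show ?case by blast
next
  case (Suc n Q W)
  note add = Suc.prems(1) and scale = Suc.prems(2) and dep = Suc.prems(3)
    and Wadd = Suc.prems(4) and Wscale = Suc.prems(5) and ex = Suc.prems(6)
  define Q' where "Q' = (\<lambda>w c. Q w (c(n:=0)))"
  have add': "Q' (w + w') (\<lambda>i. c i + c' i)" if "Q' w c" "Q' w' c'" for w w' c c'
  proof -
    have e: "(\<lambda>i. c i + c' i)(n := 0) = (\<lambda>i. (c(n:=0)) i + (c'(n:=0)) i)" by auto
    show ?thesis using add[OF that[unfolded Q'_def]] unfolding Q'_def e .
  qed
  have scale': "Q' (t *\<^sub>R w) (\<lambda>i. t * c i)" if "Q' w c" for w c t
  proof -
    have e: "(\<lambda>i. t * c i)(n := 0) = (\<lambda>i. t * (c(n:=0)) i)" by auto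
    show ?thesis using scale[OF that[unfolded Q'_def]] unfolding Q'_def e .
  qed
  have dep': "Q' w c'" if "\<forall>i<n. c i = c' i" "Q' w c" for w c c'
  proof -
    have "\<forall>i<Suc n. (c(n:=0)) i = (c'(n:=0)) i" using that(1) by (auto simp: less_Suc_eq)
    then show ?thesis using dep that(2) unfolding Q'_def by blast
  qed
  have Q'0: "Q' w (\<lambda>_. 0) = Q w (\<lambda>_. 0)" for w
  proof -
    have "(\<lambda>_. 0::real)(n := 0) = (\<lambda>_. 0)" by auto
    then show ?thesis unfolding Q'_def by simp
  qed
  show ?case
  proof (cases "\<exists>w0\<in>W. \<exists>c0. Q w0 c0 \<and> c0 n \<noteq> 0")
    case True
    then obtain w0 c0 where w0: "w0 \<in> W" "Q w0 c0" "c0 n \<noteq> 0" by blast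
    define W' where "W' = {w\<in>W. \<exists>c. Q w c \<and> c n = 0}"
    have Wadd': "w + w' \<in> W'" if hw: "w \<in> W'" "w' \<in> W'" for w w'
    proof -
      obtain c c' where "Q w c" "c n = 0" "Q w' c'" "c' n = 0" using hw unfolding W'_def by blast
      then show ?thesis using add[of w c w' c'] Wadd hw unfolding W'_def by force
    qed
    have Wscale': "t *\<^sub>R w \<in> W'" if hw: "w \<in> W'" for w t
    proof -
      obtain c where "Q w c" "c n = 0" using hw unfolding W'_def by blast
      then show ?thesis using scale[of w c t] Wscale hw unfolding W'_def by force
    qed
    have ex': "\<forall>w\<in>W'. \<exists>c. Q' w c"
    proof
      fix w assume "w \<in> W'"
      then obtain c where "Q w c" "c n = 0" unfolding W'_def by blast
      then have "c(n:=0) = c" by auto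
      then show "\<exists>c. Q' w c" using \<open>Q w c\<close> unfolding Q'_def by metis
    qed
    obtain m :: nat and ws where ws: "\<forall>j<m. ws j \<in> W'"
      and rep: "\<forall>w\<in>W'. \<exists>a. Q' (w - (\<Sum>j<m. a j *\<^sub>R ws j)) (\<lambda>_. 0)"
    proof -
      have "\<exists>(m::nat) ws. (\<forall>j<m. ws j \<in> W') \<and> (\<forall>w\<in>W'. \<exists>a. Q' (w - (\<Sum>j<m. a j *\<^sub>R ws j)) (\<lambda>_. 0))"
        by (rule Suc.IH[of Q' W']) (use add' scale' dep' Wadd' Wscale' ex' in blast)+
      then show ?thesis using that by blast
    qed
    define ws' where "ws' = ws(m := w0)"
    have "\<forall>j<Suc m. ws' j \<in> W" using ws w0 unfolding ws'_def W'_def by (auto simp: less_Suc_eq)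
    moreover have "\<forall>w\<in>W. \<exists>a. Q (w - (\<Sum>j<Suc m. a j *\<^sub>R ws' j)) (\<lambda>_. 0)"
    proof
      fix w assume w: "w \<in> W"
      obtain c where c: "Q w c" using ex w by blast
      define t where "t = c n / c0 n"
      have q: "Q (w + (- t) *\<^sub>R w0) (\<lambda>i. c i + (- t) * c0 i)"
        by (rule add[OF c scale[OF w0(2)]])
      have "c n + (- t) * c0 n = 0" using w0(3) unfolding t_def by simp
      then have "w + (- t) *\<^sub>R w0 \<in> W'" using q Wadd[OF w Wscale[OF w0(1)]] unfolding W'_def by blast
      then obtain a where a: "Q' (w + (- t) *\<^sub>R w0 - (\<Sum>j<m. a j *\<^sub>R ws j)) (\<lambda>_. 0)"
        using rep by blast
      have "(\<Sum>j<Suc m. (a(m:=t)) j *\<^sub>R ws' j) = (\<Sum>j<m. a j *\<^sub>R ws j) + t *\<^sub>R w0"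
        unfolding ws'_def by (simp add: lessThan_Suc)
      then have "w - (\<Sum>j<Suc m. (a(m:=t)) j *\<^sub>R ws' j) = w + (- t) *\<^sub>R w0 - (\<Sum>j<m. a j *\<^sub>R ws j)"
        by (simp add: algebra_simps)
      then show "\<exists>a. Q (w - (\<Sum>j<Suc m. a j *\<^sub>R ws' j)) (\<lambda>_. 0)"
        using a Q'0 by metis
    qed
    ultimately show ?thesis by blast
  next
    case False
    have ex': "\<forall>w\<in>W. \<exists>c. Q' w c"
    proof
      fix w assume "w \<in> W"
      then obtain c where "Q w c" using ex by blast
      then have "c(n:=0) = c" using False \<open>w \<in> W\<close> by auto
      then show "\<exists>c. Q' w c" using \<open>Q w c\<close> unfolding Q'_def by metis
    qed
    have "\<exists>(m::nat) ws. (\<forall>j<m. ws j \<in> W) \<and> (\<forall>w\<in>W. \<exists>a. Q' (w - (\<Sum>j<m. a j *\<^sub>R ws j)) (\<lambda>_. 0))"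
      by (rule Suc.IH[of Q' W]) (use add' scale' dep' Wadd Wscale ex' in blast)+
    then show ?thesis using Q'0 by metis
  qed
qed

definition partials :: "('a \<Rightarrow> 'b::{real_algebra_1,comm_ring_1}) \<Rightarrow> nat \<Rightarrow> (nat \<Rightarrow> 'b) \<Rightarrow> (nat \<Rightarrow> 'b \<Rightarrow> 'b) \<Rightarrow> bool" where
  "partials \<iota> r w d \<longleftrightarrow> (\<forall>\<alpha><r. derivation (d \<alpha>) \<and> (\<forall>f. d \<alpha> (\<iota> f) = 0)
                 \<and> (\<forall>\<beta><r. d \<alpha> (w \<beta>) = (if \<alpha> = \<beta> then 1 else 0)))
         \<and> (\<forall>h. (\<forall>\<alpha><r. d \<alpha> h = 0) \<longrightarrow> h \<in> range \<iota>)"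

lemma cov_partials: "abelian_covering Dx Dy \<iota> r w Dtx Dty \<Longrightarrow> \<exists>d. partials \<iota> r w d"
  unfolding abelian_covering_def partials_def by blast

lemma cov_uniq: assumes "abelian_covering Dx Dy \<iota> r w Dtx Dty" "derivation \<chi>"
  "\<And>f. \<chi> (\<iota> f) = 0" "\<And>\<alpha>. \<alpha> < r \<Longrightarrow> \<chi> (w \<alpha>) = 0"
shows "\<chi> h = 0"
proof -
  have "\<chi> = (\<lambda>_. 0)" using assms unfolding abelian_covering_def by blast
  then show ?thesis by simp
qed

lemma cov_lift: assumes "abelian_covering Dx Dy \<iota> r w Dtx Dty" "derivation \<phi>"
  shows "\<exists>\<psi>. derivation \<psi> \<and> (\<forall>f. \<psi> (\<iota> f) = \<iota> (\<phi> f)) \<and> (\<forall>\<alpha><r. \<psi> (w \<alpha>) = 0)"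
  using assms unfolding abelian_covering_def by blast

lemma cov_basic: assumes "abelian_covering Dx Dy \<iota> r w Dtx Dty"
  shows "inj \<iota>" "linear \<iota>" "\<iota> 1 = 1" "\<And>a b. \<iota> (a*b) = \<iota> a * \<iota> b"
    "derivation Dtx" "derivation Dty" "\<And>h. Dtx (Dty h) = Dty (Dtx h)"
    "\<And>f. Dtx (\<iota> f) = \<iota> (Dx f)" "\<And>f. Dty (\<iota> f) = \<iota> (Dy f)"
    "\<And>\<alpha>. \<alpha> < r \<Longrightarrow> Dtx (w \<alpha>) \<in> range \<iota>" "\<And>\<alpha>. \<alpha> < r \<Longrightarrow> Dty (w \<alpha>) \<in> range \<iota>"
  using assms unfolding abelian_covering_def total_derivs_def by (auto simp: fun_eq_iff)

lemma d_comm: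
  assumes cov: "abelian_covering Dx Dy \<iota> r w Dtx Dty" and p: "partials \<iota> r w d" and "\<alpha> < r"
  and D: "D = Dtx \<or> D = Dty"
  shows "d \<alpha> (D h) = D (d \<alpha> h)"
proof -
  have dd: "derivation (d \<alpha>)" and d\<iota>: "\<And>f. d \<alpha> (\<iota> f) = 0"
    and dw: "\<And>\<beta>. \<beta> < r \<Longrightarrow> d \<alpha> (w \<beta>) = (if \<alpha> = \<beta> then 1 else 0)"
    using p \<open>\<alpha> < r\<close> unfolding partials_def by auto
  have dD: "derivation D" using D cov_basic[OF cov] by auto
  have D\<iota>: "D (\<iota> f) \<in> range \<iota>" for f using D cov_basic(8,9)[OF cov] by auto
  have Dw: "D (w \<beta>) \<in> range \<iota>" if "\<beta> < r" for \<beta> using D cov_basic(10,11)[OF cov] that by auto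
  have "(\<lambda>h. d \<alpha> (D h) - D (d \<alpha> h)) h = 0"
  proof (rule cov_uniq[OF cov der_comm[OF dd dD]])
    fix f show "d \<alpha> (D (\<iota> f)) - D (d \<alpha> (\<iota> f)) = 0"
      using D\<iota>[of f] d\<iota> der_of_real[OF dD, of 0] by auto
  next
    fix \<beta> assume "\<beta> < r"
    then show "d \<alpha> (D (w \<beta>)) - D (d \<alpha> (w \<beta>)) = 0"
      using Dw[of \<beta>] d\<iota> dw[of \<beta>] der_one[OF dD] der_of_real[OF dD, of 0] by auto
  qed
  then show ?thesis by simp
qed

lemma ker:
  assumes cov: "abelian_covering Dx Dy \<iota> r w Dtx Dty" and dc: "diff_connected Dtx Dty"
  and hX: "\<iota> X = Dtx P" and hY: "\<iota> Y = Dty P"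
  shows "\<exists>c Q. X = (\<Sum>\<alpha><r. c \<alpha> *\<^sub>R inv \<iota> (Dtx (w \<alpha>))) + Dx Q
             \<and> Y = (\<Sum>\<alpha><r. c \<alpha> *\<^sub>R inv \<iota> (Dty (w \<alpha>))) + Dy Q"
proof -
  note cb = cov_basic[OF cov]
  obtain d where p: "partials \<iota> r w d" using cov_partials[OF cov] by blast
  have "\<forall>\<alpha>. \<exists>c. \<alpha> < r \<longrightarrow> d \<alpha> P = of_real c"
  proof (intro allI)
    fix \<alpha> show "\<exists>c. \<alpha> < r \<longrightarrow> d \<alpha> P = of_real c"
    proof (cases "\<alpha> < r")
      case True
      have d\<iota>: "\<And>f. d \<alpha> (\<iota> f) = 0" using p True unfolding partials_def by auto
      have "Dtx (d \<alpha> P) = 0" using d_comm[OF cov p True, of Dtx P] hX[symmetric] d\<iota> by simp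
      moreover have "Dty (d \<alpha> P) = 0" using d_comm[OF cov p True, of Dty P] hY[symmetric] d\<iota> by simp
      ultimately show ?thesis using dc unfolding diff_connected_def by blast
    qed simp
  qed
  then obtain c where c: "\<And>\<alpha>. \<alpha> < r \<Longrightarrow> d \<alpha> P = of_real (c \<alpha>)" by metis
  define P' where "P' = P - (\<Sum>\<alpha><r. c \<alpha> *\<^sub>R w \<alpha>)"
  have "d \<beta> P' = 0" if "\<beta> < r" for \<beta>
  proof -
    have dd: "derivation (d \<beta>)"
      and dw: "\<And>\<alpha>. \<alpha> < r \<Longrightarrow> d \<beta> (w \<alpha>) = (if \<beta> = \<alpha> then 1 else 0)"
      using p that unfolding partials_def by auto
    have l: "linear (d \<beta>)" using der_linear[OF dd] .
    have "d \<beta> P' = d \<beta> P - (\<Sum>\<alpha><r. c \<alpha> *\<^sub>R d \<beta> (w \<alpha>))"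
      unfolding P'_def by (simp add: linear_diff[OF l] linear_sum[OF l] linear_cmul[OF l])
    also have "(\<Sum>\<alpha><r. c \<alpha> *\<^sub>R d \<beta> (w \<alpha>)) = (\<Sum>\<alpha><r. if \<alpha> = \<beta> then c \<alpha> *\<^sub>R 1 else 0)"
      by (rule sum.cong) (auto simp: dw)
    also have "\<dots> = c \<beta> *\<^sub>R 1" using that by simp
    finally show ?thesis using c[OF that] by (simp add: scaleR_conv_of_real)
  qed
  then have "P' \<in> range \<iota>" using p unfolding partials_def by blast
  then obtain Q where Q: "P' = \<iota> Q" by blast
  have P: "P = \<iota> Q + (\<Sum>\<alpha><r. c \<alpha> *\<^sub>R w \<alpha>)" using Q unfolding P'_def by (simp add: algebra_simps)
  have lx: "linear Dtx" and ly: "linear Dty" using cb(5,6) der_linear by auto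
  have iX: "\<iota> (inv \<iota> (Dtx (w \<alpha>))) = Dtx (w \<alpha>)" if "\<alpha> < r" for \<alpha>
    using cb(10)[OF that] by (simp add: f_inv_into_f)
  have iY: "\<iota> (inv \<iota> (Dty (w \<alpha>))) = Dty (w \<alpha>)" if "\<alpha> < r" for \<alpha>
    using cb(11)[OF that] by (simp add: f_inv_into_f)
  have "\<iota> X = \<iota> ((\<Sum>\<alpha><r. c \<alpha> *\<^sub>R inv \<iota> (Dtx (w \<alpha>))) + Dx Q)"
    unfolding hX P using iX
    by (simp add: linear_add[OF lx] linear_sum[OF lx] linear_cmul[OF lx] linear_add[OF cb(2)]
        linear_sum[OF cb(2)] linear_cmul[OF cb(2)] cb(8) add.commute)
  moreover have "\<iota> Y = \<iota> ((\<Sum>\<alpha><r. c \<alpha> *\<^sub>R inv \<iota> (Dty (w \<alpha>))) + Dy Q)"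
    unfolding hY P using iY
    by (simp add: linear_add[OF ly] linear_sum[OF ly] linear_cmul[OF ly] linear_add[OF cb(2)]
        linear_sum[OF cb(2)] linear_cmul[OF cb(2)] cb(9) add.commute)
  ultimately show ?thesis using cb(1) unfolding inj_def by blast
qed

lemma part1:
  assumes cov: "abelian_covering Dx Dy \<iota> r w Dtx Dty" and dc: "diff_connected Dtx Dty"
  and fd: "CL_fin_dim Dtx Dty" and td: "total_derivs Dx Dy"
  shows "CL_fin_dim Dx Dy"
proof -
  note cb = cov_basic[OF cov]
  have lx: "linear Dtx" and ly: "linear Dty" using cb(5,6) der_linear by auto
  have lX: "linear Dx" and lY: "linear Dy" using td der_linear unfolding total_derivs_def by auto
  obtain n :: nat and Xs Ys where nX: "\<forall>X Y. Dtx Y = Dty X \<longrightarrow>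
        (\<exists>c P. X = (\<Sum>i<n. c i *\<^sub>R Xs i) + Dtx P \<and> Y = (\<Sum>i<n. c i *\<^sub>R Ys i) + Dty P)"
    using fd unfolding CL_fin_dim_def by blast
  define Q where "Q = (\<lambda>(u::'a\<times>'a) c. \<exists>P. \<iota> (fst u) = (\<Sum>i<n. c i *\<^sub>R Xs i) + Dtx P
                         \<and> \<iota> (snd u) = (\<Sum>i<n. c i *\<^sub>R Ys i) + Dty P)"
  define W where "W = {u::'a\<times>'a. Dx (snd u) = Dy (fst u)}"
  have "\<exists>(m::nat) ws. (\<forall>j<m. ws j \<in> W) \<and> (\<forall>u\<in>W. \<exists>a. Q (u - (\<Sum>j<m. a j *\<^sub>R ws j)) (\<lambda>_. 0))"
  proof (rule fin_gen[where n=n])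
    fix u u' c c' assume "Q u c" "Q u' c'"
    then obtain P P' where "\<iota> (fst u) = (\<Sum>i<n. c i *\<^sub>R Xs i) + Dtx P" "\<iota> (snd u) = (\<Sum>i<n. c i *\<^sub>R Ys i) + Dty P"
      "\<iota> (fst u') = (\<Sum>i<n. c' i *\<^sub>R Xs i) + Dtx P'" "\<iota> (snd u') = (\<Sum>i<n. c' i *\<^sub>R Ys i) + Dty P'"
      unfolding Q_def by auto
    then show "Q (u + u') (\<lambda>i. c i + c' i)" unfolding Q_def
      by (intro exI[of _ "P + P'"])
         (simp add: linear_add[OF cb(2)] linear_add[OF lx] linear_add[OF ly] scaleR_add_left sum.distrib)
  next
    fix u c t assume "Q u c"
    then obtain P where "\<iota> (fst u) = (\<Sum>i<n. c i *\<^sub>R Xs i) + Dtx P" "\<iota> (snd u) = (\<Sum>i<n. c i *\<^sub>R Ys i) + Dty P"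
      unfolding Q_def by auto
    then show "Q (t *\<^sub>R u) (\<lambda>i. t * c i)" unfolding Q_def
      by (intro exI[of _ "t *\<^sub>R P"])
         (simp add: linear_cmul[OF cb(2)] linear_cmul[OF lx] linear_cmul[OF ly] scaleR_add_right scaleR_sum_right)
  next
    fix u c c' assume "\<forall>i<n. c i = c' i" "Q u c"
    moreover have "(\<Sum>i<n. c i *\<^sub>R Xs i) = (\<Sum>i<n. c' i *\<^sub>R Xs i)" "(\<Sum>i<n. c i *\<^sub>R Ys i) = (\<Sum>i<n. c' i *\<^sub>R Ys i)"
      using calculation(1) by (auto intro: sum.cong)
    ultimately show "Q u c'" unfolding Q_def by simp
  next
    fix u u' assume "u \<in> W" "u' \<in> W"
    then show "u + u' \<in> W" unfolding W_def by (simp add: linear_add[OF lX] linear_add[OF lY])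
  next
    fix u t assume "u \<in> W"
    then show "t *\<^sub>R u \<in> W" unfolding W_def by (simp add: linear_cmul[OF lX] linear_cmul[OF lY])
  next
    show "\<forall>u\<in>W. \<exists>c. Q u c"
    proof
      fix u assume "u \<in> W"
      then have "Dtx (\<iota> (snd u)) = Dty (\<iota> (fst u))" unfolding W_def by (simp add: cb(8,9))
      then show "\<exists>c. Q u c" using nX unfolding Q_def by blast
    qed
  qed
  then obtain m :: nat and ws where ws: "\<forall>j<m. ws j \<in> W"
    and rep: "\<forall>u\<in>W. \<exists>a. Q (u - (\<Sum>j<m. a j *\<^sub>R ws j)) (\<lambda>_. 0)" by blast
  define Xa where "Xa = (\<lambda>\<alpha>. inv \<iota> (Dtx (w \<alpha>)))"
  define Ya where "Ya = (\<lambda>\<alpha>. inv \<iota> (Dty (w \<alpha>)))"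
  define Xs' where "Xs' = (\<lambda>i. if i < m then fst (ws i) else Xa (i - m))"
  define Ys' where "Ys' = (\<lambda>i. if i < m then snd (ws i) else Ya (i - m))"
  have "\<forall>X Y. Dx Y = Dy X \<longrightarrow>
        (\<exists>c P. X = (\<Sum>i<m+r. c i *\<^sub>R Xs' i) + Dx P \<and> Y = (\<Sum>i<m+r. c i *\<^sub>R Ys' i) + Dy P)"
  proof (intro allI impI)
    fix X Y assume "Dx Y = Dy X"
    then have "(X, Y) \<in> W" unfolding W_def by simp
    then obtain a where "Q ((X, Y) - (\<Sum>j<m. a j *\<^sub>R ws j)) (\<lambda>_. 0)" using rep by blast
    then obtain P where
      "\<iota> (X - (\<Sum>j<m. a j *\<^sub>R fst (ws j))) = Dtx P" "\<iota> (Y - (\<Sum>j<m. a j *\<^sub>R snd (ws j))) = Dty P"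
      unfolding Q_def by (auto simp: fst_sum snd_sum)
    from ker[OF cov dc this] obtain c P' where
      cX: "X - (\<Sum>j<m. a j *\<^sub>R fst (ws j)) = (\<Sum>\<alpha><r. c \<alpha> *\<^sub>R Xa \<alpha>) + Dx P'" and
      cY: "Y - (\<Sum>j<m. a j *\<^sub>R snd (ws j)) = (\<Sum>\<alpha><r. c \<alpha> *\<^sub>R Ya \<alpha>) + Dy P'"
      unfolding Xa_def Ya_def by blast
    define c' where "c' = (\<lambda>i. if i < m then a i else c (i - m))"
    have sX: "(\<Sum>i<m+r. c' i *\<^sub>R Xs' i) = (\<Sum>j<m. a j *\<^sub>R fst (ws j)) + (\<Sum>\<alpha><r. c \<alpha> *\<^sub>R Xa \<alpha>)"
      unfolding sum_split_add c'_def Xs'_def by simp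
    have sY: "(\<Sum>i<m+r. c' i *\<^sub>R Ys' i) = (\<Sum>j<m. a j *\<^sub>R snd (ws j)) + (\<Sum>\<alpha><r. c \<alpha> *\<^sub>R Ya \<alpha>)"
      unfolding sum_split_add c'_def Ys'_def by simp
    show "\<exists>c P. X = (\<Sum>i<m+r. c i *\<^sub>R Xs' i) + Dx P \<and> Y = (\<Sum>i<m+r. c i *\<^sub>R Ys' i) + Dy P"
    proof (intro exI[of _ c'] exI[of _ P'] conjI)
      show "X = (\<Sum>i<m+r. c' i *\<^sub>R Xs' i) + Dx P'" unfolding sX using cX by (simp add: diff_eq_eq add.assoc)
      show "Y = (\<Sum>i<m+r. c' i *\<^sub>R Ys' i) + Dy P'" unfolding sY using cY by (simp add: diff_eq_eq add.assoc)
    qed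
  qed
  then show ?thesis unfolding CL_fin_dim_def by blast
qed

lemma fin_dim_from_seq:
  fixes M :: nat
  assumes "\<forall>\<phi>\<in>S. \<exists>a. \<phi> = (\<lambda>f. \<Sum>j<M. a j *\<^sub>R v j f)"
  shows "fin_dim_maps (S :: ('a \<Rightarrow> 'b::real_vector) set)"
  unfolding fin_dim_maps_def
proof (intro exI[of _ "v ` {..<M}"] conjI ballI)
  show "finite (v ` {..<M})" by simp
  fix \<phi> assume "\<phi> \<in> S"
  then obtain a where a: "\<phi> = (\<lambda>f. \<Sum>j<M. a j *\<^sub>R v j f)" using assms by blast
  define c where "c = (\<lambda>\<psi>. \<Sum>j\<in>{j\<in>{..<M}. v j = \<psi>}. a j)"
  have "(\<Sum>j<M. a j *\<^sub>R v j f) = (\<Sum>\<psi>\<in>v ` {..<M}. c \<psi> *\<^sub>R \<psi> f)" for f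
  proof -
    have "(\<Sum>j<M. a j *\<^sub>R v j f) = (\<Sum>\<psi>\<in>v ` {..<M}. \<Sum>j\<in>{j\<in>{..<M}. v j = \<psi>}. a j *\<^sub>R v j f)"
      by (rule sum.image_gen) simp
    also have "\<dots> = (\<Sum>\<psi>\<in>v ` {..<M}. c \<psi> *\<^sub>R \<psi> f)"
      unfolding c_def scaleR_sum_left by (intro sum.cong refl) auto
    finally show ?thesis .
  qed
  then show "\<exists>c. \<phi> = (\<lambda>f. \<Sum>\<psi>\<in>v ` {..<M}. c \<psi> *\<^sub>R \<psi> f)" using a by auto
qed

lemma sym_add: assumes "linear Dx" "linear Dy" "\<phi> \<in> sym_set B Dx Dy" "\<phi>' \<in> sym_set B Dx Dy"
  shows "\<phi> + \<phi>' \<in> sym_set B Dx Dy"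
proof -
  have e: "\<phi> + \<phi>' = (\<lambda>h. \<phi> h + \<phi>' h)" by (simp add: fun_eq_iff)
  show ?thesis using assms unfolding sym_set_def e
    by (auto simp: der_add fun_eq_iff linear_add)
qed

lemma sym_scale: assumes "linear Dx" "linear Dy" "\<phi> \<in> sym_set B Dx Dy"
  shows "t *\<^sub>R \<phi> \<in> sym_set B Dx Dy"
proof -
  have e: "t *\<^sub>R \<phi> = (\<lambda>h. t *\<^sub>R \<phi> h)" by (simp add: fun_eq_iff)
  show ?thesis using assms unfolding sym_set_def e
    by (auto simp: der_scale fun_eq_iff linear_cmul)
qed

lemma sym_zero: assumes "linear Dx" "linear Dy"
  shows "(0::'a::{real_algebra_1,comm_ring_1} \<Rightarrow> 'a) \<in> sym_set B Dx Dy"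
proof -
  have e: "(0::'a \<Rightarrow> 'a) = (\<lambda>h. 0)" by (simp add: fun_eq_iff)
  show ?thesis using assms unfolding sym_set_def e
    by (auto simp: der_zero fun_eq_iff linear_0)
qed

lemma sym_sum: fixes m :: nat assumes "linear Dx" "linear Dy" "\<forall>j<m. \<phi>s j \<in> sym_set B Dx Dy"
  shows "(\<Sum>j<m. a j *\<^sub>R \<phi>s j) \<in> sym_set B Dx Dy"
  using assms(3)
proof (induction m)
  case 0 then show ?case using sym_zero[OF assms(1,2), of B] by (simp add: zero_fun_def)
next
  case (Suc m)
  have e: "(\<Sum>j<Suc m. a j *\<^sub>R \<phi>s j) = a m *\<^sub>R \<phi>s m + (\<Sum>j<m. a j *\<^sub>R \<phi>s j)"
    by (simp only: sum.lessThan_Suc add.commute)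
  have "a m *\<^sub>R \<phi>s m + (\<Sum>j<m. a j *\<^sub>R \<phi>s j) \<in> sym_set B Dx Dy"
  proof -
    have h1: "\<phi>s m \<in> sym_set B Dx Dy" using Suc.prems by simp
    have "\<forall>j<m. \<phi>s j \<in> sym_set B Dx Dy" using Suc.prems by simp
    note h2 = Suc.IH[OF this]
    show ?thesis by (rule sym_add[OF assms(1,2) sym_scale[OF assms(1,2) h1] h2])
  qed
  then show ?case by (simp only: e)
qed

lemma sym_diff: assumes "linear Dx" "linear Dy" "\<phi> \<in> sym_set B Dx Dy" "\<phi>' \<in> sym_set B Dx Dy"
  shows "\<phi> - \<phi>' \<in> sym_set B Dx Dy"
proof -
  have e: "\<phi> - \<phi>' = \<phi> + (-1) *\<^sub>R \<phi>'" by simp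
  have "\<phi> + (-1) *\<^sub>R \<phi>' \<in> sym_set B Dx Dy" by (rule sym_add[OF assms(1,2,3) sym_scale[OF assms(1,2,4)]])
  then show ?thesis by (simp only: e)
qed

lemma idx_bound: "(\<alpha>::nat) < r \<Longrightarrow> i < n \<Longrightarrow> \<alpha> * n + i < r * n"
proof -
  assume a: "\<alpha> < r" "i < n"
  have "\<alpha> * n + i < \<alpha> * n + n" using a by simp
  also have "\<dots> = Suc \<alpha> * n" by simp
  also have "\<dots> \<le> r * n" using a by (intro mult_le_mono1) simp
  finally show ?thesis .
qed

lemma lift_sym:
  assumes cov: "abelian_covering Dx Dy \<iota> r w Dtx Dty"
  and \<kappa>: "\<kappa> \<in> sym_set B Dx Dy"
  and ex: "\<forall>\<alpha><r. \<exists>P. \<iota> (\<kappa> (inv \<iota> (Dtx (w \<alpha>)))) = Dtx P \<and> \<iota> (\<kappa> (inv \<iota> (Dty (w \<alpha>)))) = Dty P"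
  shows "\<exists>\<psi>\<in>sym_set (\<iota> ` B) Dtx Dty. \<forall>f. \<psi> (\<iota> f) = \<iota> (\<kappa> f)"
proof -
  note cb = cov_basic[OF cov]
  obtain d where p: "partials \<iota> r w d" using cov_partials[OF cov] by blast
  have dd: "\<And>\<alpha>. \<alpha> < r \<Longrightarrow> derivation (d \<alpha>)" and d\<iota>: "\<And>\<alpha> f. \<alpha> < r \<Longrightarrow> d \<alpha> (\<iota> f) = 0"
    and dw: "\<And>\<alpha> \<beta>. \<alpha> < r \<Longrightarrow> \<beta> < r \<Longrightarrow> d \<alpha> (w \<beta>) = (if \<alpha> = \<beta> then 1 else 0)"
    using p unfolding partials_def by auto
  have kd: "derivation \<kappa>" and kB: "\<And>b. b \<in> B \<Longrightarrow> \<kappa> b = 0"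
    and kx: "\<And>h. \<kappa> (Dx h) = Dx (\<kappa> h)" and ky: "\<And>h. \<kappa> (Dy h) = Dy (\<kappa> h)"
    using \<kappa> unfolding sym_set_def by (auto simp: fun_eq_iff)
  obtain P where P: "\<And>\<alpha>. \<alpha> < r \<Longrightarrow> \<iota> (\<kappa> (inv \<iota> (Dtx (w \<alpha>)))) = Dtx (P \<alpha>) \<and> \<iota> (\<kappa> (inv \<iota> (Dty (w \<alpha>)))) = Dty (P \<alpha>)"
    using ex by metis
  obtain \<psi>0 where \<psi>0: "derivation \<psi>0" "\<And>f. \<psi>0 (\<iota> f) = \<iota> (\<kappa> f)" "\<And>\<alpha>. \<alpha> < r \<Longrightarrow> \<psi>0 (w \<alpha>) = 0"
    using cov_lift[OF cov kd] by blast
  define \<psi> where "\<psi> = (\<lambda>h. \<psi>0 h + (\<Sum>\<alpha><r. P \<alpha> * d \<alpha> h))"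
  have \<psi>d: "derivation \<psi>" unfolding \<psi>_def
    by (intro der_add \<psi>0(1) der_sum der_multP dd) simp
  have \<psi>\<iota>: "\<psi> (\<iota> f) = \<iota> (\<kappa> f)" for f unfolding \<psi>_def using \<psi>0(2) d\<iota> by simp
  have \<psi>w: "\<psi> (w \<beta>) = P \<beta>" if "\<beta> < r" for \<beta>
  proof -
    have "(\<Sum>\<alpha><r. P \<alpha> * d \<alpha> (w \<beta>)) = (\<Sum>\<alpha><r. if \<alpha> = \<beta> then P \<alpha> else 0)"
      by (rule sum.cong) (auto simp: dw that)
    then show ?thesis unfolding \<psi>_def using \<psi>0(3)[OF that] that by simp
  qed
  have l\<iota>: "linear \<iota>" using cb(2) .
  have comm: "\<psi> (D h) = D (\<psi> h)" if D: "D = Dtx \<or> D = Dty" for D h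
  proof -
    have dD: "derivation D" using D cb(5,6) by auto
    have "(\<lambda>h. \<psi> (D h) - D (\<psi> h)) h = 0"
    proof (rule cov_uniq[OF cov der_comm[OF \<psi>d dD]])
      fix f show "\<psi> (D (\<iota> f)) - D (\<psi> (\<iota> f)) = 0"
        using D by (auto simp: cb(8,9) \<psi>\<iota> kx ky)
    next
      fix \<beta> assume b: "\<beta> < r"
      have e: "D (w \<beta>) = \<iota> (inv \<iota> (D (w \<beta>)))" using D cb(10,11)[OF b] by (auto simp: f_inv_into_f)
      have "\<psi> (D (w \<beta>)) = \<iota> (\<kappa> (inv \<iota> (D (w \<beta>))))" by (subst e) (rule \<psi>\<iota>)
      also have "\<dots> = D (P \<beta>)" using D P[OF b] by auto
      finally show "\<psi> (D (w \<beta>)) - D (\<psi> (w \<beta>)) = 0" using \<psi>w[OF b] by simp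
    qed
    then show ?thesis by simp
  qed
  have "\<psi> \<in> sym_set (\<iota> ` B) Dtx Dty"
    unfolding sym_set_def using \<psi>d comm \<psi>\<iota> kB linear_0[OF l\<iota>] by (auto simp: fun_eq_iff)
  then show ?thesis using \<psi>\<iota> by blast
qed

lemma part2:
  assumes cov: "abelian_covering Dx Dy \<iota> r w Dtx Dty" and dc: "diff_connected Dtx Dty"
  and td: "total_derivs Dx Dy"
  and fs: "fin_dim_maps (sym_set (\<iota> ` B) Dtx Dty)" and fd: "CL_fin_dim Dtx Dty"
  shows "fin_dim_maps (sym_set B Dx Dy)"
proof -
  note cb = cov_basic[OF cov]
  have lx: "linear Dtx" and ly: "linear Dty" using cb(5,6) der_linear by auto
  have lX: "linear Dx" and lY: "linear Dy" using td der_linear unfolding total_derivs_def by auto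
  have comXY: "Dx (Dy h) = Dy (Dx h)" for h using td unfolding total_derivs_def by (auto simp: fun_eq_iff)
  define W where "W = sym_set B Dx Dy"
  define Xa where "Xa = (\<lambda>\<alpha>. inv \<iota> (Dtx (w \<alpha>)))"
  define Ya where "Ya = (\<lambda>\<alpha>. inv \<iota> (Dty (w \<alpha>)))"
  have iX: "\<iota> (Xa \<alpha>) = Dtx (w \<alpha>)" if "\<alpha> < r" for \<alpha>
    using cb(10)[OF that] unfolding Xa_def by (simp add: f_inv_into_f)
  have iY: "\<iota> (Ya \<alpha>) = Dty (w \<alpha>)" if "\<alpha> < r" for \<alpha>
    using cb(11)[OF that] unfolding Ya_def by (simp add: f_inv_into_f)
  have clXY: "Dx (Ya \<alpha>) = Dy (Xa \<alpha>)" if "\<alpha> < r" for \<alpha>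
  proof -
    have "\<iota> (Dx (Ya \<alpha>)) = \<iota> (Dy (Xa \<alpha>))"
      using cb(7)[of "w \<alpha>"] by (simp add: cb(8,9)[symmetric] iX[OF that] iY[OF that])
    then show ?thesis using cb(1) unfolding inj_def by blast
  qed
  obtain n :: nat and Xs Ys where nX: "\<forall>X Y. Dtx Y = Dty X \<longrightarrow>
        (\<exists>c P. X = (\<Sum>i<n. c i *\<^sub>R Xs i) + Dtx P \<and> Y = (\<Sum>i<n. c i *\<^sub>R Ys i) + Dty P)"
    using fd unfolding CL_fin_dim_def by blast
  have Wadd: "\<phi> + \<phi>' \<in> W" if "\<phi> \<in> W" "\<phi>' \<in> W" for \<phi> \<phi>'
    using sym_add[OF lX lY] that unfolding W_def by blast
  have Wscale: "t *\<^sub>R \<phi> \<in> W" if "\<phi> \<in> W" for \<phi> t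
    using sym_scale[OF lX lY] that unfolding W_def by blast
  text \<open>Step 1: modulo finitely many symmetries, all obstructions vanish.\<close>
  define Q1 where "Q1 = (\<lambda>(\<phi>::'a \<Rightarrow> 'a) c. \<forall>\<alpha><r. \<exists>P.
      \<iota> (\<phi> (Xa \<alpha>)) = (\<Sum>i<n. c (\<alpha>*n+i) *\<^sub>R Xs i) + Dtx P \<and>
      \<iota> (\<phi> (Ya \<alpha>)) = (\<Sum>i<n. c (\<alpha>*n+i) *\<^sub>R Ys i) + Dty P)"
  have "\<exists>(m::nat) \<phi>s. (\<forall>j<m. \<phi>s j \<in> W) \<and> (\<forall>\<phi>\<in>W. \<exists>a. Q1 (\<phi> - (\<Sum>j<m. a j *\<^sub>R \<phi>s j)) (\<lambda>_. 0))"
  proof (rule fin_gen[where n="r*n"])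
    fix u u' c c' assume h: "Q1 u c" "Q1 u' c'"
    show "Q1 (u + u') (\<lambda>i. c i + c' i)" unfolding Q1_def
    proof (intro allI impI)
      fix \<alpha> assume a: "\<alpha> < r"
      obtain P P' where "\<iota> (u (Xa \<alpha>)) = (\<Sum>i<n. c (\<alpha>*n+i) *\<^sub>R Xs i) + Dtx P" "\<iota> (u (Ya \<alpha>)) = (\<Sum>i<n. c (\<alpha>*n+i) *\<^sub>R Ys i) + Dty P"
        "\<iota> (u' (Xa \<alpha>)) = (\<Sum>i<n. c' (\<alpha>*n+i) *\<^sub>R Xs i) + Dtx P'" "\<iota> (u' (Ya \<alpha>)) = (\<Sum>i<n. c' (\<alpha>*n+i) *\<^sub>R Ys i) + Dty P'"
        using h a unfolding Q1_def by blast
      then show "\<exists>P. \<iota> ((u + u') (Xa \<alpha>)) = (\<Sum>i<n. (c (\<alpha>*n+i) + c' (\<alpha>*n+i)) *\<^sub>R Xs i) + Dtx P \<and>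
          \<iota> ((u + u') (Ya \<alpha>)) = (\<Sum>i<n. (c (\<alpha>*n+i) + c' (\<alpha>*n+i)) *\<^sub>R Ys i) + Dty P"
        by (intro exI[of _ "P + P'"])
           (simp add: linear_add[OF cb(2)] linear_add[OF lx] linear_add[OF ly] scaleR_add_left sum.distrib)
    qed
  next
    fix u c t assume h: "Q1 u c"
    show "Q1 (t *\<^sub>R u) (\<lambda>i. t * c i)" unfolding Q1_def
    proof (intro allI impI)
      fix \<alpha> assume a: "\<alpha> < r"
      obtain P where "\<iota> (u (Xa \<alpha>)) = (\<Sum>i<n. c (\<alpha>*n+i) *\<^sub>R Xs i) + Dtx P" "\<iota> (u (Ya \<alpha>)) = (\<Sum>i<n. c (\<alpha>*n+i) *\<^sub>R Ys i) + Dty P"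
        using h a unfolding Q1_def by blast
      then show "\<exists>P. \<iota> ((t *\<^sub>R u) (Xa \<alpha>)) = (\<Sum>i<n. (t * c (\<alpha>*n+i)) *\<^sub>R Xs i) + Dtx P \<and>
          \<iota> ((t *\<^sub>R u) (Ya \<alpha>)) = (\<Sum>i<n. (t * c (\<alpha>*n+i)) *\<^sub>R Ys i) + Dty P"
        by (intro exI[of _ "t *\<^sub>R P"])
           (simp add: linear_cmul[OF cb(2)] linear_cmul[OF lx] linear_cmul[OF ly] scaleR_add_right scaleR_sum_right)
    qed
  next
    fix u c c' assume h: "\<forall>i<r*n. c i = c' i" "Q1 u c"
    have "(\<Sum>i<n. c (\<alpha>*n+i) *\<^sub>R Z i) = (\<Sum>i<n. c' (\<alpha>*n+i) *\<^sub>R Z i)" if "\<alpha> < r" for \<alpha> and Z :: "nat \<Rightarrow> 'b"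
      using h(1) idx_bound[OF that] by (intro sum.cong) auto
    then show "Q1 u c'" using h(2) unfolding Q1_def by simp
  next
    fix u u' assume "u \<in> W" "u' \<in> W" then show "u + u' \<in> W" by (rule Wadd)
  next
    fix u t assume "u \<in> W" then show "t *\<^sub>R u \<in> W" by (rule Wscale)
  next
    show "\<forall>u\<in>W. \<exists>c. Q1 u c"
    proof
      fix u assume "u \<in> W"
      then have ux: "\<And>h. u (Dx h) = Dx (u h)" and uy: "\<And>h. u (Dy h) = Dy (u h)"
        unfolding W_def sym_set_def by (auto simp: fun_eq_iff)
      have "\<forall>\<alpha>. \<exists>C. \<alpha> < r \<longrightarrow> (\<exists>P. \<iota> (u (Xa \<alpha>)) = (\<Sum>i<n. C i *\<^sub>R Xs i) + Dtx P \<and>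
            \<iota> (u (Ya \<alpha>)) = (\<Sum>i<n. C i *\<^sub>R Ys i) + Dty P)"
      proof
        fix \<alpha> show "\<exists>C. \<alpha> < r \<longrightarrow> (\<exists>P. \<iota> (u (Xa \<alpha>)) = (\<Sum>i<n. C i *\<^sub>R Xs i) + Dtx P \<and>
            \<iota> (u (Ya \<alpha>)) = (\<Sum>i<n. C i *\<^sub>R Ys i) + Dty P)"
        proof (cases "\<alpha> < r")
          case True
          have "Dtx (\<iota> (u (Ya \<alpha>))) = Dty (\<iota> (u (Xa \<alpha>)))"
            by (simp add: cb(8,9) ux[symmetric] uy[symmetric] clXY[OF True])
          then show ?thesis using nX by blast
        qed simp
      qed
      then obtain C where C: "\<And>\<alpha>. \<alpha> < r \<Longrightarrow> \<exists>P. \<iota> (u (Xa \<alpha>)) = (\<Sum>i<n. C \<alpha> i *\<^sub>R Xs i) + Dtx P \<and>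
            \<iota> (u (Ya \<alpha>)) = (\<Sum>i<n. C \<alpha> i *\<^sub>R Ys i) + Dty P" by metis
      define c where "c = (\<lambda>k. C (k div n) (k mod n))"
      have "c (\<alpha>*n+i) = C \<alpha> i" if "i < n" for \<alpha> i
        using that unfolding c_def by simp
      then have "(\<Sum>i<n. c (\<alpha>*n+i) *\<^sub>R Z i) = (\<Sum>i<n. C \<alpha> i *\<^sub>R Z i)" for \<alpha> and Z :: "nat \<Rightarrow> 'b"
        by (intro sum.cong) auto
      then have "Q1 u c" unfolding Q1_def using C by simp
      then show "\<exists>c. Q1 u c" by blast
    qed
  qed
  then obtain m :: nat and \<phi>s where \<phi>s: "\<forall>j<m. \<phi>s j \<in> W"
    and rep1: "\<forall>\<phi>\<in>W. \<exists>a. Q1 (\<phi> - (\<Sum>j<m. a j *\<^sub>R \<phi>s j)) (\<lambda>_. 0)" by blast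
  text \<open>Step 2: the kernel embeds into the symmetries of the covering.\<close>
  define W2 where "W2 = {\<kappa>\<in>W. \<forall>\<alpha><r. \<exists>P. \<iota> (\<kappa> (Xa \<alpha>)) = Dtx P \<and> \<iota> (\<kappa> (Ya \<alpha>)) = Dty P}"
  obtain Bs where Bs: "finite Bs" "\<forall>\<psi>\<in>sym_set (\<iota> ` B) Dtx Dty. \<exists>c. \<psi> = (\<lambda>f. \<Sum>b\<in>Bs. c b *\<^sub>R b f)"
    using fs unfolding fin_dim_maps_def by blast
  obtain bs where bs: "bij_betw bs {0..<card Bs} Bs" using ex_bij_betw_nat_finite[OF Bs(1)] by blast
  define N where "N = card Bs"
  have bs': "bij_betw bs {..<N} Bs" using bs unfolding N_def by (simp add: atLeast0LessThan)
  define Q2 where "Q2 = (\<lambda>(\<kappa>::'a \<Rightarrow> 'a) c. \<forall>f. \<iota> (\<kappa> f) = (\<Sum>i<N. c i *\<^sub>R bs i (\<iota> f)))"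
  have "\<exists>(m::nat) \<kappa>s. (\<forall>j<m. \<kappa>s j \<in> W2) \<and> (\<forall>\<kappa>\<in>W2. \<exists>a. Q2 (\<kappa> - (\<Sum>j<m. a j *\<^sub>R \<kappa>s j)) (\<lambda>_. 0))"
  proof (rule fin_gen[where n=N])
    fix u u' c c' assume "Q2 u c" "Q2 u' c'"
    then show "Q2 (u + u') (\<lambda>i. c i + c' i)" unfolding Q2_def
      by (simp add: linear_add[OF cb(2)] scaleR_add_left sum.distrib)
  next
    fix u c t assume "Q2 u c"
    then show "Q2 (t *\<^sub>R u) (\<lambda>i. t * c i)" unfolding Q2_def
      by (simp add: linear_cmul[OF cb(2)] scaleR_sum_right)
  next
    fix u c c' assume h: "\<forall>i<N. c i = c' i" "Q2 u c"
    have "(\<Sum>i<N. c i *\<^sub>R bs i (\<iota> f)) = (\<Sum>i<N. c' i *\<^sub>R bs i (\<iota> f))" for f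
      using h(1) by (intro sum.cong) auto
    then show "Q2 u c'" using h(2) unfolding Q2_def by simp
  next
    fix u u' assume "u \<in> W2" "u' \<in> W2"
    then show "u + u' \<in> W2" unfolding W2_def
      by (auto intro!: Wadd) (metis linear_add[OF cb(2)] linear_add[OF lx] linear_add[OF ly])
  next
    fix u t assume "u \<in> W2"
    then show "t *\<^sub>R u \<in> W2" unfolding W2_def
      by (auto intro!: Wscale) (metis linear_cmul[OF cb(2)] linear_cmul[OF lx] linear_cmul[OF ly])
  next
    show "\<forall>u\<in>W2. \<exists>c. Q2 u c"
    proof
      fix u assume "u \<in> W2"
      then have "u \<in> sym_set B Dx Dy" "\<forall>\<alpha><r. \<exists>P. \<iota> (u (inv \<iota> (Dtx (w \<alpha>)))) = Dtx P \<and> \<iota> (u (inv \<iota> (Dty (w \<alpha>)))) = Dty P"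
        unfolding W2_def W_def Xa_def Ya_def by auto
      from lift_sym[OF cov this] obtain \<psi> where \<psi>: "\<psi> \<in> sym_set (\<iota> ` B) Dtx Dty" "\<forall>f. \<psi> (\<iota> f) = \<iota> (u f)"
        by blast
      obtain c where c: "\<psi> = (\<lambda>f. \<Sum>b\<in>Bs. c b *\<^sub>R b f)" using Bs(2) \<psi>(1) by blast
      have "\<iota> (u f) = (\<Sum>i<N. c (bs i) *\<^sub>R bs i (\<iota> f))" for f
      proof -
        have "\<iota> (u f) = (\<Sum>b\<in>Bs. c b *\<^sub>R b (\<iota> f))" using \<psi>(2) c by metis
        also have "\<dots> = (\<Sum>i<N. c (bs i) *\<^sub>R bs i (\<iota> f))"
          by (rule sum.reindex_bij_betw[OF bs', symmetric])
        finally show ?thesis .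
      qed
      then have "Q2 u (\<lambda>i. c (bs i))" unfolding Q2_def by blast
      then show "\<exists>c. Q2 u c" by blast
    qed
  qed
  then obtain m2 :: nat and \<kappa>s where \<kappa>s: "\<forall>j<m2. \<kappa>s j \<in> W2"
    and rep2: "\<forall>\<kappa>\<in>W2. \<exists>a. Q2 (\<kappa> - (\<Sum>j<m2. a j *\<^sub>R \<kappa>s j)) (\<lambda>_. 0)" by blast
  define v where "v = (\<lambda>i. if i < m then \<phi>s i else \<kappa>s (i - m))"
  have "\<forall>\<phi>\<in>W. \<exists>a. \<phi> = (\<lambda>f. \<Sum>j<m+m2. a j *\<^sub>R v j f)"
  proof
    fix \<phi> assume \<phi>: "\<phi> \<in> W"
    obtain a where a: "Q1 (\<phi> - (\<Sum>j<m. a j *\<^sub>R \<phi>s j)) (\<lambda>_. 0)" using rep1 \<phi> by blast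
    define \<kappa> where "\<kappa> = \<phi> - (\<Sum>j<m. a j *\<^sub>R \<phi>s j)"
    have "(\<Sum>j<m. a j *\<^sub>R \<phi>s j) \<in> W" using sym_sum[OF lX lY] \<phi>s unfolding W_def by blast
    then have "\<kappa> \<in> W" using sym_diff[OF lX lY] \<phi> unfolding \<kappa>_def W_def by blast
    moreover have "\<forall>\<alpha><r. \<exists>P. \<iota> (\<kappa> (Xa \<alpha>)) = Dtx P \<and> \<iota> (\<kappa> (Ya \<alpha>)) = Dty P"
      using a unfolding Q1_def \<kappa>_def by simp
    ultimately have "\<kappa> \<in> W2" unfolding W2_def by blast
    then obtain b where b: "Q2 (\<kappa> - (\<Sum>j<m2. b j *\<^sub>R \<kappa>s j)) (\<lambda>_. 0)" using rep2 by blast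
    have "(\<kappa> - (\<Sum>j<m2. b j *\<^sub>R \<kappa>s j)) f = 0" for f
    proof -
      have "\<iota> ((\<kappa> - (\<Sum>j<m2. b j *\<^sub>R \<kappa>s j)) f) = \<iota> 0" using b linear_0[OF cb(2)] unfolding Q2_def by simp
      then show ?thesis using cb(1) unfolding inj_def by blast
    qed
    then have "\<phi> f = (\<Sum>j<m. a j *\<^sub>R \<phi>s j f) + (\<Sum>j<m2. b j *\<^sub>R \<kappa>s j f)" for f
      unfolding \<kappa>_def by (simp add: sum_fun_apply algebra_simps)
    moreover have "(\<Sum>j<m+m2. (\<lambda>i. if i < m then a i else b (i - m)) j *\<^sub>R v j f)
        = (\<Sum>j<m. a j *\<^sub>R \<phi>s j f) + (\<Sum>j<m2. b j *\<^sub>R \<kappa>s j f)" for f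
      unfolding sum_split_add v_def by simp
    ultimately show "\<exists>a. \<phi> = (\<lambda>f. \<Sum>j<m+m2. a j *\<^sub>R v j f)"
      by (intro exI[of _ "\<lambda>i. if i < m then a i else b (i - m)"]) (auto simp: fun_eq_iff)
  qed
  then show ?thesis unfolding W_def by (rule fin_dim_from_seq)
qed

theorem mainTheorem8:
  fixes Dx Dy :: "'a::{real_algebra_1,comm_ring_1} \<Rightarrow> 'a"
    and B :: "'a set"
    and \<iota> :: "'a \<Rightarrow> 'b::{real_algebra_1,comm_ring_1}"
    and r :: nat and w :: "nat \<Rightarrow> 'b"
    and Dtx Dty :: "'b \<Rightarrow> 'b"
  assumes "total_derivs Dx Dy"
    and "diff_connected Dx Dy"
    and "abelian_covering Dx Dy \<iota> r w Dtx Dty"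
    and "diff_connected Dtx Dty"
  shows "(\<not> CL_fin_dim Dx Dy \<longrightarrow> \<not> CL_fin_dim Dtx Dty)
       \<and> (\<not> fin_dim_maps (sym_set B Dx Dy) \<longrightarrow>
            \<not> fin_dim_maps (sym_set (\<iota> ` B) Dtx Dty) \<or> \<not> CL_fin_dim Dtx Dty)"
  using part1[OF assms(3,4) _ assms(1)] part2[OF assms(3,4,1)] by blast

end
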